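(* Let $N\ge2$, $\alpha\in(0,1)$, $\beta\in(\alpha,1)$, let $\Omega\subset\mathbb{R}^{N-1}$ be open and let $u,v\in C^{1,\beta}_{loc}(\Omega)\cap C(\mathbb{R}^{N-1})$. Set $w=u-v$. Then for every $x\in\Omega$, $$H(u)(x)-H(v)(x)=PV\int_{\mathbb{R}^{N-1}}\frac{w(x)-w(y)}{|x-y|^{N+\alpha}}\,\tilde q_{u,v}(x,y)\,dy,$$ where $\tilde q_{u,v}(x,y):=-2\int_0^1F'\big(p_v(x,y)+\rho\,p_{u-v}(x,y)\big)\,d\rho$. In particular, if $H(u)(x)-H(v)(x)\ge0$ for every $x\in\Omega$ and $u\ge v$ on $\mathbb{R}^{N-1}\setminus\Omega$, then $u-v$ cannot attain its global minimum (over $\mathbb{R}^{N-1}$) at a point of $\Omega$ unless $u-v$ is constant on $\mathbb{R}^{N-1}$.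
   Context: For a function $f:\mathbb{R}^{N-1}\to\mathbb{R}$ and $x\ne y$, set $p_f(x,y)=\frac{f(y)-f(x)}{|x-y|}$, and let $F(p)=\int_p^{+\infty}(1+\tau^2)^{-(N+\alpha)/2}\,d\tau$ (so $F'(p)=-(1+p^2)^{-(N+\alpha)/2}<0$). For $f$ continuous on $\mathbb{R}^{N-1}$ and $C^{1,\beta}$ near $x$, the nonlocal mean curvature of the graph of $f$ at $x$ is $$H(f)(x)=PV\int_{\mathbb{R}^{N-1}}\frac{F(p_f(x,y))-F(-p_f(x,y))}{|x-y|^{N-1+\alpha}}\,dy=\lim_{\varepsilon\to0}\int_{\mathbb{R}^{N-1}\setminus B_\varepsilon(x)}\frac{F(p_f(x,y))-F(-p_f(x,y))}{|x-y|^{N-1+\alpha}}\,dy,$$ which equals the nonlocal mean curvature $PV\int_{\mathbb{R}^N}\tau_{E_f}(z)|z-(x,f(x))|^{-N-\alpha}dz$ of the boundary of the subgraph $E_f=\{(y,t):t<f(y)\}$ at $(x,f(x))$, with $\tau_E=1_{\mathbb{R}^N\setminus E}-1_E$. *)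

theory Defs
  imports "HOL-Analysis.Analysis"
begin

text \<open>The space R^(N-1) is modelled by a Euclidean space type 'a with DIM('a) = N - 1.\<close>

definition Fnl :: "nat \<Rightarrow> real \<Rightarrow> real \<Rightarrow> real" where
  "Fnl N \<alpha> p = integral {p..} (\<lambda>\<tau>. (1 + \<tau>\<^sup>2) powr (- (real N + \<alpha>) / 2))"

definition Fnl' :: "nat \<Rightarrow> real \<Rightarrow> real \<Rightarrow> real" where
  "Fnl' N \<alpha> p = - ((1 + p\<^sup>2) powr (- (real N + \<alpha>) / 2))"

definition pquot :: "('a::euclidean_space \<Rightarrow> real) \<Rightarrow> 'a \<Rightarrow> 'a \<Rightarrow> real" where
  "pquot f x y = (f y - f x) / norm (x - y)"

text \<open>Nonlocal mean curvature of the graph of f at x, as a principal value.\<close>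
definition NMC :: "nat \<Rightarrow> real \<Rightarrow> ('a::euclidean_space \<Rightarrow> real) \<Rightarrow> 'a \<Rightarrow> real" where
  "NMC N \<alpha> f x = Lim (at_right 0)
     (\<lambda>\<epsilon>. LINT y : - ball x \<epsilon> | lborel.
        (Fnl N \<alpha> (pquot f x y) - Fnl N \<alpha> (- pquot f x y)) / norm (x - y) powr (real N - 1 + \<alpha>))"

definition qtilde :: "nat \<Rightarrow> real \<Rightarrow> ('a::euclidean_space \<Rightarrow> real) \<Rightarrow> ('a \<Rightarrow> real) \<Rightarrow> 'a \<Rightarrow> 'a \<Rightarrow> real" where
  "qtilde N \<alpha> u v x y =
     - 2 * integral {0..1} (\<lambda>\<rho>. Fnl' N \<alpha> (pquot v x y + \<rho> * pquot (\<lambda>z. u z - v z) x y))"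

definition C1beta_loc :: "real \<Rightarrow> 'a::euclidean_space set \<Rightarrow> ('a \<Rightarrow> real) \<Rightarrow> bool" where
  "C1beta_loc \<beta> \<Omega> f \<longleftrightarrow> (\<exists>g :: 'a \<Rightarrow> 'a.
      (\<forall>x\<in>\<Omega>. (f has_derivative (\<lambda>h. g x \<bullet> h)) (at x)) \<and>
      (\<forall>K. compact K \<and> K \<subseteq> \<Omega> \<longrightarrow>
         (\<exists>C. \<forall>x\<in>K. \<forall>y\<in>K. norm (g x - g y) \<le> C * dist x y powr \<beta>)))"

end

theory Submission
  imports Defs "HOL-Probability.Sinc_Integral"
begin
definition phi :: "nat \<Rightarrow> real \<Rightarrow> real \<Rightarrow> real" where
  "phi N \<alpha> t = (1 + t\<^sup>2) powr (- (real N + \<alpha>) / 2)"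

lemma one_plus_sq_pos: "0 < 1 + (t::real)\<^sup>2"
  by (simp add: add_pos_nonneg)

lemma phi_pos: "0 < phi N \<alpha> t"
  unfolding phi_def using one_plus_sq_pos[of t] by simp

lemma phi_le1: assumes "real N + \<alpha> \<ge> 0" shows "phi N \<alpha> t \<le> 1"
proof -
  have "(1 + t\<^sup>2) powr (- (real N + \<alpha>) / 2) \<le> (1 + t\<^sup>2) powr 0"
    using assms by (intro powr_mono) auto
  then show ?thesis unfolding phi_def using one_plus_sq_pos[of t] by simp
qed

lemma phi_le_inv: assumes "real N + \<alpha> \<ge> 2" shows "phi N \<alpha> t \<le> inverse (1 + t^2)"
proof -
  have "(1 + t\<^sup>2) powr (- (real N + \<alpha>) / 2) \<le> (1 + t\<^sup>2) powr (-1)"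
    using assms by (intro powr_mono) auto
  also have "\<dots> = inverse (1 + t^2)"
    by (simp add: powr_minus add_pos_nonneg)
  finally show ?thesis unfolding phi_def .
qed

lemma phi_even: "phi N \<alpha> (-t) = phi N \<alpha> t"
  unfolding phi_def by simp

lemma phi_cont: "continuous_on S (phi N \<alpha>)"
  unfolding phi_def by (intro continuous_intros) (metis one_plus_sq_pos order_less_irrefl)

lemma phi_meas[measurable]: "phi N \<alpha> \<in> borel_measurable borel"
  by (rule borel_measurable_continuous_onI) (rule phi_cont)

lemma phi_integrable: assumes "real N + \<alpha> \<ge> 2" shows "integrable lborel (phi N \<alpha>)"
proof -
  have "integrable lborel (\<lambda>x::real. inverse (1 + x^2))"
    using integrable_inverse_1_plus_square by (simp add: set_integrable_def)
  then show ?thesis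
    by (rule Bochner_Integration.integrable_bound)
       (use phi_le_inv[OF assms] phi_pos in \<open>auto intro!: AE_I2 simp: less_imp_le\<close>)
qed

lemma Fnl'_phi: "Fnl' N \<alpha> p = - phi N \<alpha> p"
  unfolding Fnl'_def phi_def by simp

lemma Fnl_phi: "Fnl N \<alpha> p = integral {p..} (phi N \<alpha>)"
  unfolding Fnl_def phi_def by simp

lemma phi_int_on: assumes "real N + \<alpha> \<ge> 2" "S \<in> sets borel"
  shows "phi N \<alpha> integrable_on S"
proof -
  have "set_integrable lborel S (phi N \<alpha>)"
    unfolding set_integrable_def using integrable_mult_indicator[OF _ phi_integrable[OF assms(1)], of S] assms(2)
    by simp
  then show ?thesis by (rule set_borel_integral_eq_integral(1))
qed

lemma F_split: assumes "real N + \<alpha> \<ge> 2" "p \<le> q"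
  shows "Fnl N \<alpha> p = integral {p..q} (phi N \<alpha>) + Fnl N \<alpha> q"
proof -
  have e: "{p..} = {p..q} \<union> {q..}" using assms(2) by auto
  have n: "negligible ({p..q} \<inter> {q..})"
  proof -
    have "{p..q} \<inter> {q..} = {q}" using assms(2) by auto
    then show ?thesis by simp
  qed
  show ?thesis unfolding Fnl_phi e
    by (rule integral_Un[OF phi_int_on[OF assms(1)] phi_int_on[OF assms(1)] n]) auto
qed

lemma F_nonneg: assumes "real N + \<alpha> \<ge> 2" shows "0 \<le> Fnl N \<alpha> p"
  unfolding Fnl_phi
  by (rule integral_nonneg) (auto intro!: phi_int_on[OF assms] less_imp_le[OF phi_pos])

lemma F_le: assumes "real N + \<alpha> \<ge> 2" shows "Fnl N \<alpha> p \<le> integral UNIV (phi N \<alpha>)"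
  unfolding Fnl_phi
  by (rule integral_subset_le) (auto intro!: phi_int_on[OF assms] less_imp_le[OF phi_pos])

lemma F_deriv: assumes "real N + \<alpha> \<ge> 2"
  shows "(Fnl N \<alpha> has_real_derivative - phi N \<alpha> p) (at p)"
proof -
  define a where "a = p - 1"
  define b where "b = p + 1"
  have "((\<lambda>y. integral {a..y} (phi N \<alpha>)) has_real_derivative phi N \<alpha> p) (at p within {a..b})"
    by (rule integral_has_real_derivative) (auto simp: a_def b_def phi_cont)
  then have h: "((\<lambda>y. integral {a..y} (phi N \<alpha>)) has_real_derivative phi N \<alpha> p) (at p)"
    by (simp add: at_within_Icc_at a_def b_def)
  have d: "((\<lambda>y. Fnl N \<alpha> a - integral {a..y} (phi N \<alpha>)) has_real_derivative - phi N \<alpha> p) (at p)"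
    using DERIV_diff[OF DERIV_const h] by simp
  show ?thesis
  proof (rule has_field_derivative_transform_within_open[OF d, of "{a<..}"])
    fix y assume "y \<in> {a<..}"
    then show "Fnl N \<alpha> a - integral {a..y} (phi N \<alpha>) = Fnl N \<alpha> y"
      using F_split[OF assms, of a y] by auto
  qed (auto simp: a_def)
qed

definition Psi :: "nat \<Rightarrow> real \<Rightarrow> real \<Rightarrow> real" where
  "Psi N \<alpha> p = Fnl N \<alpha> p - Fnl N \<alpha> (- p)"

lemma Psi_deriv: assumes "real N + \<alpha> \<ge> 2"
  shows "(Psi N \<alpha> has_real_derivative 2 * Fnl' N \<alpha> p) (at p)"
proof -
  have d2: "((\<lambda>z. Fnl N \<alpha> (- z)) has_real_derivative (- phi N \<alpha> (-p)) * (-1)) (at p)"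
    by (rule DERIV_chain2[OF F_deriv[OF assms]]) (auto intro!: derivative_eq_intros)
  have "((\<lambda>p. Fnl N \<alpha> p - Fnl N \<alpha> (- p)) has_real_derivative - phi N \<alpha> p - (- phi N \<alpha> (-p)) * (-1)) (at p)"
    by (rule DERIV_diff[OF F_deriv[OF assms] d2])
  then show ?thesis unfolding Psi_def[abs_def] Fnl'_phi phi_even by simp
qed

lemma Psi_odd: "Psi N \<alpha> (- p) = - Psi N \<alpha> p"
  unfolding Psi_def by simp

lemma Psi_0: "Psi N \<alpha> 0 = 0"
  unfolding Psi_def by simp

lemma Psi_bound: assumes "real N + \<alpha> \<ge> 2"
  shows "\<bar>Psi N \<alpha> p\<bar> \<le> integral UNIV (phi N \<alpha>)"
  unfolding Psi_def using F_nonneg[OF assms, of p] F_nonneg[OF assms, of "-p"] F_le[OF assms, of p] F_le[OF assms, of "-p"]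
  by linarith

lemma Psi_diff: assumes "real N + \<alpha> \<ge> 2"
  shows "Psi N \<alpha> b - Psi N \<alpha> a = (b - a) * (2 * integral {0..1} (\<lambda>\<rho>. Fnl' N \<alpha> (a + \<rho> * (b - a))))"
proof -
  have c: "continuous_on {0..1} (\<lambda>\<rho>. Fnl' N \<alpha> (a + \<rho> * (b - a)))"
    unfolding Fnl'_phi
    by (intro continuous_intros continuous_on_compose2[OF phi_cont[of UNIV]]) auto
  have "((\<lambda>\<rho>. (b - a) * (2 * Fnl' N \<alpha> (a + \<rho> * (b - a)))) has_integral
        (Psi N \<alpha> (a + 1 * (b - a)) - Psi N \<alpha> (a + 0 * (b - a)))) {0..1}"
  proof (rule fundamental_theorem_of_calculus)
    fix x :: real assume "x \<in> {0..1}"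
    have "((\<lambda>\<rho>. Psi N \<alpha> (a + \<rho> * (b - a))) has_real_derivative (2 * Fnl' N \<alpha> (a + x * (b - a))) * (b - a)) (at x)"
      by (rule DERIV_chain2[OF Psi_deriv[OF assms]]) (auto intro!: derivative_eq_intros)
    then show "((\<lambda>\<rho>. Psi N \<alpha> (a + \<rho> * (b - a))) has_vector_derivative (b - a) * (2 * Fnl' N \<alpha> (a + x * (b - a)))) (at x within {0..1})"
      by (simp add: has_real_derivative_iff_has_vector_derivative[symmetric] mult.commute has_field_derivative_at_within)
  qed simp
  moreover have "((\<lambda>\<rho>. (b - a) * (2 * Fnl' N \<alpha> (a + \<rho> * (b - a)))) has_integral
        ((b - a) * (2 * integral {0..1} (\<lambda>\<rho>. Fnl' N \<alpha> (a + \<rho> * (b - a)))))) {0..1}"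
    by (intro has_integral_mult_right integrable_integral integrable_continuous_real c)
  ultimately have "Psi N \<alpha> (a + 1 * (b - a)) - Psi N \<alpha> (a + 0 * (b - a)) = (b - a) * (2 * integral {0..1} (\<lambda>\<rho>. Fnl' N \<alpha> (a + \<rho> * (b - a))))"
    by (rule has_integral_unique)
  then show ?thesis by simp
qed

lemma int_phi_bounds: assumes "real N + \<alpha> \<ge> 2"
  shows "0 \<le> integral {0..1} (\<lambda>\<rho>. phi N \<alpha> (a + \<rho> * c))"
    and "integral {0..1} (\<lambda>\<rho>. phi N \<alpha> (a + \<rho> * c)) \<le> 1"
    and "0 < integral {0..1} (\<lambda>\<rho>. phi N \<alpha> (a + \<rho> * c))"
proof -
  have c: "(\<lambda>\<rho>. phi N \<alpha> (a + \<rho> * c)) integrable_on {0..1}"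
    by (intro integrable_continuous_real continuous_intros continuous_on_compose2[OF phi_cont[of UNIV]]) auto
  show "0 \<le> integral {0..1} (\<lambda>\<rho>. phi N \<alpha> (a + \<rho> * c))"
    by (rule integral_nonneg[OF c]) (simp add: less_imp_le phi_pos)
  have "integral {0..1} (\<lambda>\<rho>. phi N \<alpha> (a + \<rho> * c)) \<le> integral {0..1::real} (\<lambda>\<rho>. 1::real)"
    by (rule integral_le[OF c]) (use phi_le1 assms in auto)
  then show "integral {0..1} (\<lambda>\<rho>. phi N \<alpha> (a + \<rho> * c)) \<le> 1" by simp
  define m where "m = phi N \<alpha> (\<bar>a\<bar> + \<bar>c\<bar>)"
  have m: "m \<le> phi N \<alpha> (a + \<rho> * c)" if "\<rho> \<in> {0..1}" for \<rho>
  proof -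
    have "\<bar>a + \<rho> * c\<bar> \<le> \<bar>a\<bar> + \<bar>c\<bar>"
      using that by (auto simp: abs_mult intro!: order.trans[OF abs_triangle_ineq] mult_left_le_one_le)
    then have "(a + \<rho> * c)\<^sup>2 \<le> (\<bar>a\<bar> + \<bar>c\<bar>)\<^sup>2"
      by (metis abs_ge_zero power2_abs power_mono)
    then show ?thesis unfolding m_def phi_def
      using assms by (intro powr_mono2') (auto simp: add_pos_nonneg)
  qed
  have "integral {0..1::real} (\<lambda>\<rho>. m) \<le> integral {0..1} (\<lambda>\<rho>. phi N \<alpha> (a + \<rho> * c))"
    by (rule integral_le[OF _ c]) (use m in auto)
  moreover have "0 < m" unfolding m_def by (rule phi_pos)
  ultimately show "0 < integral {0..1} (\<lambda>\<rho>. phi N \<alpha> (a + \<rho> * c))" by simp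
qed

lemma ball_emeasure:
  fixes x :: "'a::euclidean_space"
  assumes "0 \<le> r"
  shows "emeasure lborel (ball x r) = ennreal (r ^ DIM('a) * measure lborel (ball (0::'a) 1))"
proof -
  have "emeasure lborel (ball x r) = ennreal (measure lborel (ball x r))"
    using emeasure_lborel_ball_finite[of x r] by (simp add: emeasure_eq_ennreal_measure)
  then show ?thesis using content_ball_conv_unit_ball[OF assms, of x] by simp
qed

lemma nn_integral_ball_sum:
  fixes x :: "'a::euclidean_space"
  assumes "\<And>k. 0 \<le> a k" "\<And>k. 0 \<le> r k"
  shows "(\<integral>\<^sup>+y. (\<Sum>k. ennreal (a k) * indicator (ball x (r k)) y) \<partial>lborel)
       = (\<Sum>k. ennreal (a k * (r k ^ DIM('a) * measure lborel (ball (0::'a) 1))))"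
proof -
  have [measurable]: "\<And>k. ball x (r k) \<in> sets borel" by simp
  have "(\<integral>\<^sup>+y. (\<Sum>k. ennreal (a k) * indicator (ball x (r k)) y) \<partial>lborel)
      = (\<Sum>k. \<integral>\<^sup>+y. ennreal (a k) * indicator (ball x (r k)) y \<partial>lborel)"
    by (rule nn_integral_suminf) measurable
  also have "\<dots> = (\<Sum>k. ennreal (a k * (r k ^ DIM('a) * measure lborel (ball (0::'a) 1))))"
    using assms by (simp add: nn_integral_cmult_indicator ball_emeasure ennreal_mult)
  finally show ?thesis .
qed

lemma powr_2pow_mult: "0 < R \<Longrightarrow> (2 ^ k * R) powr a = (2 powr a) ^ k * R powr (a::real)"
  by (simp add: powr_mult powr_realpow[symmetric] powr_powr mult.commute)

lemma powr_2pow_div: "0 < R \<Longrightarrow> (R / 2 ^ k) powr a = R powr (a::real) / (2 powr a) ^ k"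
  by (simp add: powr_divide powr_realpow[symmetric] powr_powr mult.commute)

lemma dyadic_up: assumes "1 \<le> (t::real)" shows "\<exists>k::nat. 2 ^ k \<le> t \<and> t < 2 ^ (k + 1)"
proof -
  obtain n :: nat where n: "t < 2 ^ n" using real_arch_pow[of 2 t] by auto
  define m where "m = (LEAST n::nat. t < 2 ^ n)"
  have m1: "t < 2 ^ m" unfolding m_def by (rule LeastI[of _ n]) (rule n)
  have "m \<noteq> 0"
  proof
    assume "m = 0" with m1 assms show False by simp
  qed
  then obtain k where k: "m = Suc k" by (cases m) auto
  have "\<not> t < 2 ^ k" using not_less_Least[of k "\<lambda>n. t < 2 ^ n"] k unfolding m_def by auto
  then show ?thesis using m1 k by (auto intro!: exI[of _ k])
qed

lemma dyadic_down: assumes "1 < (t::real)" shows "\<exists>k::nat. 2 ^ k < t \<and> t \<le> 2 ^ (k + 1)"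
proof -
  obtain n :: nat where n: "t \<le> 2 ^ n" using real_arch_pow[of 2 t] by (auto intro: less_imp_le)
  define m where "m = (LEAST n::nat. t \<le> 2 ^ n)"
  have m1: "t \<le> 2 ^ m" unfolding m_def by (rule LeastI[of _ n]) (rule n)
  have "m \<noteq> 0"
  proof
    assume "m = 0" with m1 assms show False by simp
  qed
  then obtain k where k: "m = Suc k" by (cases m) auto
  have "\<not> t \<le> 2 ^ k" using not_less_Least[of k "\<lambda>n. t \<le> 2 ^ n"] k unfolding m_def by auto
  then show ?thesis using m1 k by (auto intro!: exI[of _ k])
qed

lemma ennreal_le_suminf: "f k \<le> (\<Sum>k. f k :: ennreal)"
  using sum_le_suminf[OF summableI, of "{k}" f] by simp

lemma unit_ball_pos: "0 \<le> measure lborel (ball (0::'a::euclidean_space) 1)"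
  by simp

lemma outer_nn:
  fixes x :: "'a::euclidean_space"
  assumes s: "real DIM('a) < s" and R: "0 < R"
  shows "(\<integral>\<^sup>+y. indicator (- ball x R) y * ennreal (norm (x - y) powr (- s)) \<partial>lborel) < \<infinity>"
proof -
  define d where "d = DIM('a)"
  define a where "a k = (2^k * R) powr (-s)" for k::nat
  define r where "r k = 2^(k+1) * R" for k::nat
  define c where "c = measure lborel (ball (0::'a) 1)"
  define q where "q = 2 powr (-s) * 2 ^ d"
  have c0: "0 \<le> c" unfolding c_def by simp
  have q2: "q = 2 powr (real d - s)"
    unfolding q_def by (simp add: powr_diff powr_realpow[symmetric] powr_minus divide_inverse mult.commute)
  have q0: "0 \<le> q" unfolding q_def by simp
  have q1: "q < 1" unfolding q2 using s by (intro powr_less_one) (auto simp: d_def)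
  have trm: "a k * (r k ^ d * c) = (R powr (-s) * 2^d * R^d * c) * q^k" for k
  proof -
    have a1: "a k = (2 powr -s)^k * R powr -s" unfolding a_def by (rule powr_2pow_mult[OF R])
    show ?thesis unfolding a1 r_def q_def
      by (simp add: power_mult_distrib power_add mult_ac flip: power_mult)
  qed
  have summ: "summable (\<lambda>k. (R powr (-s) * 2^d * R^d * c) * q^k)"
    using q0 q1 by (intro summable_mult summable_geometric) simp
  have pw: "indicator (- ball x R) y * ennreal (norm (x - y) powr (- s))
      \<le> (\<Sum>k. ennreal (a k) * indicator (ball x (r k)) y)" for y
  proof (cases "y \<in> ball x R")
    case True then show ?thesis by simp
  next
    case False
    then have dy: "R \<le> norm (x - y)" by (simp add: dist_norm)
    have "1 \<le> norm (x - y) / R" using dy R by simp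
    then obtain k :: nat where k: "2 ^ k \<le> norm (x - y) / R" "norm (x - y) / R < 2 ^ (k + 1)"
      using dyadic_up by blast
    have k1: "2 ^ k * R \<le> norm (x - y)" using k(1) R by (simp add: field_simps)
    have k2: "norm (x - y) < r k" using k(2) R by (simp add: field_simps r_def)
    have "norm (x - y) powr (- s) \<le> a k"
      unfolding a_def using k1 R s by (intro powr_mono2') (auto simp: d_def)
    then have "indicator (- ball x R) y * ennreal (norm (x - y) powr (- s)) \<le> ennreal (a k) * indicator (ball x (r k)) y"
      using False k2 by (auto simp: dist_norm intro!: ennreal_leI)
    also have "\<dots> \<le> (\<Sum>k. ennreal (a k) * indicator (ball x (r k)) y)"
      by (rule ennreal_le_suminf)
    finally show ?thesis .
  qed
  have "(\<integral>\<^sup>+y. indicator (- ball x R) y * ennreal (norm (x - y) powr (- s)) \<partial>lborel)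
      \<le> (\<integral>\<^sup>+y. (\<Sum>k. ennreal (a k) * indicator (ball x (r k)) y) \<partial>lborel)"
    by (rule nn_integral_mono) (rule pw)
  also have "\<dots> = (\<Sum>k. ennreal (a k * (r k ^ DIM('a) * c)))"
    unfolding c_def using R by (intro nn_integral_ball_sum) (auto simp: a_def r_def)
  also have "\<dots> = (\<Sum>k. ennreal ((R powr (-s) * 2^d * R^d * c) * q^k))"
    by (simp only: d_def[symmetric] trm)
  also have "\<dots> = ennreal (\<Sum>k. (R powr (-s) * 2^d * R^d * c) * q^k)"
    using summ q0 c0 R by (intro suminf_ennreal2) auto
  also have "\<dots> < \<infinity>" by simp
  finally show ?thesis .
qed

lemma inner_nn:
  assumes t: "0 \<le> \<tau>" "\<tau> < real DIM('a::euclidean_space)"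
  shows "\<exists>K\<ge>0. \<forall>R>0. \<forall>x::'a. (\<integral>\<^sup>+y. indicator (ball x R) y * ennreal (norm (x - y) powr (- \<tau>)) \<partial>lborel)
            \<le> ennreal (K * R powr (real DIM('a) - \<tau>))"
proof -
  define d where "d = DIM('a)"
  define c where "c = measure lborel (ball (0::'a) 1)"
  define q where "q = 2 powr \<tau> / 2 ^ d"
  have c0: "0 \<le> c" unfolding c_def by simp
  have q0: "0 \<le> q" unfolding q_def by simp
  have q1: "q < 1"
  proof -
    have "2 powr \<tau> < 2 powr real d" using t by (simp add: d_def)
    then show ?thesis unfolding q_def by (simp add: powr_realpow)
  qed
  define K where "K = 2 powr \<tau> * c * (\<Sum>k. q ^ k)"
  have summ0: "summable (\<lambda>k. q ^ k)" using q0 q1 by (intro summable_geometric) simp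
  have K0: "0 \<le> K" unfolding K_def using q0 c0 summ0 by (intro mult_nonneg_nonneg suminf_nonneg) auto
  show ?thesis
  proof (intro exI[of _ K] conjI allI impI K0)
    fix R :: real and x :: 'a assume R: "0 < R"
    define a where "a k = (R / 2^(k+1)) powr (-\<tau>)" for k::nat
    define r where "r k = R / 2^k" for k::nat
    have trm: "a k * (r k ^ d * c) = (R powr (real d - \<tau>) * 2 powr \<tau> * c) * q^k" for k
    proof -
      have a1: "a k = R powr (-\<tau>) / (2 powr (-\<tau>)) ^ (k+1)"
        unfolding a_def by (rule powr_2pow_div[OF R])
      have a2: "(2 powr (-\<tau>)) ^ (k+1) = inverse ((2 powr \<tau>) ^ (k+1))"
        by (simp add: powr_minus power_inverse)
      have A: "a k = R powr (-\<tau>) * (2 powr \<tau>) ^ (k+1)"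
        unfolding a1 a2 by (simp add: divide_inverse)
      have B: "r k ^ d = R ^ d / (2 ^ d) ^ k"
        unfolding r_def by (simp add: power_divide flip: power_mult)
      have C: "R powr (-\<tau>) * R ^ d = R powr (real d - \<tau>)"
        using R by (simp add: powr_realpow[symmetric] powr_add[symmetric])
      show ?thesis unfolding A B q_def power_divide C[symmetric]
        by (simp add: field_simps)
    qed
    have summ: "summable (\<lambda>k. (R powr (real d - \<tau>) * 2 powr \<tau> * c) * q^k)"
      using summ0 by (intro summable_mult)
    have pw: "indicator (ball x R) y * ennreal (norm (x - y) powr (- \<tau>))
        \<le> (\<Sum>k. ennreal (a k) * indicator (ball x (r k)) y)" for y
    proof (cases "y \<in> ball x R \<and> y \<noteq> x")
      case False then show ?thesis by auto
    next
      case True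
      then have dy: "norm (x - y) < R" "0 < norm (x - y)" by (auto simp: dist_norm)
      have "1 < R / norm (x - y)" using dy by simp
      then obtain k :: nat where k: "2 ^ k < R / norm (x - y)" "R / norm (x - y) \<le> 2 ^ (k + 1)"
        using dyadic_down by blast
      have k1: "R / 2 ^ (k + 1) \<le> norm (x - y)" using k(2) dy by (simp add: field_simps)
      have k2: "norm (x - y) < r k" using k(1) dy by (simp add: field_simps r_def)
      have "norm (x - y) powr (- \<tau>) \<le> a k"
        unfolding a_def using k1 R t by (intro powr_mono2') auto
      then have "indicator (ball x R) y * ennreal (norm (x - y) powr (- \<tau>)) \<le> ennreal (a k) * indicator (ball x (r k)) y"
        using True k2 by (auto simp: dist_norm intro!: ennreal_leI)
      also have "\<dots> \<le> (\<Sum>k. ennreal (a k) * indicator (ball x (r k)) y)"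
        by (rule ennreal_le_suminf)
      finally show ?thesis .
    qed
    have "(\<integral>\<^sup>+y. indicator (ball x R) y * ennreal (norm (x - y) powr (- \<tau>)) \<partial>lborel)
        \<le> (\<integral>\<^sup>+y. (\<Sum>k. ennreal (a k) * indicator (ball x (r k)) y) \<partial>lborel)"
      by (rule nn_integral_mono) (rule pw)
    also have "\<dots> = (\<Sum>k. ennreal (a k * (r k ^ DIM('a) * c)))"
      unfolding c_def using R by (intro nn_integral_ball_sum) (auto simp: a_def r_def)
    also have "\<dots> = (\<Sum>k. ennreal ((R powr (real d - \<tau>) * 2 powr \<tau> * c) * q^k))"
      by (simp only: d_def[symmetric] trm)
    also have "\<dots> = ennreal (\<Sum>k. (R powr (real d - \<tau>) * 2 powr \<tau> * c) * q^k)"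
      using summ q0 c0 R by (intro suminf_ennreal2) auto
    also have "(\<Sum>k. (R powr (real d - \<tau>) * 2 powr \<tau> * c) * q^k) = K * R powr (real DIM('a) - \<tau>)"
      unfolding K_def d_def by (subst suminf_mult[OF summ0]) (simp add: mult_ac)
    finally show "(\<integral>\<^sup>+y. indicator (ball x R) y * ennreal (norm (x - y) powr (- \<tau>)) \<partial>lborel)
            \<le> ennreal (K * R powr (real DIM('a) - \<tau>))" .
  qed
qed

lemma Psi_cont: assumes "real N + \<alpha> \<ge> 2" shows "continuous_on S (Psi N \<alpha>)"
  using Psi_deriv[OF assms] by (meson DERIV_isCont continuous_at_imp_continuous_on)

lemma Psi_meas: assumes "real N + \<alpha> \<ge> 2" shows "Psi N \<alpha> \<in> borel_measurable borel"
  by (rule borel_measurable_continuous_onI) (rule Psi_cont[OF assms])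

lemma Psi_lip: assumes "real N + \<alpha> \<ge> 2" shows "\<bar>Psi N \<alpha> b - Psi N \<alpha> a\<bar> \<le> 2 * \<bar>b - a\<bar>"
proof -
  define I where "I = integral {0..1} (\<lambda>\<rho>. phi N \<alpha> (a + \<rho> * (b - a)))"
  have I: "0 \<le> I" "I \<le> 1" unfolding I_def using int_phi_bounds[OF assms] by auto
  have "Psi N \<alpha> b - Psi N \<alpha> a = (b - a) * (2 * (- I))"
    unfolding Psi_diff[OF assms] I_def Fnl'_phi by simp
  then have "\<bar>Psi N \<alpha> b - Psi N \<alpha> a\<bar> = \<bar>b - a\<bar> * (2 * I)" using I by (simp add: abs_mult)
  also have "\<dots> \<le> \<bar>b - a\<bar> * 2" using I by (intro mult_left_mono) auto
  finally show ?thesis by simp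
qed

lemma meas_normpow[measurable]: "(\<lambda>y::'a::euclidean_space. norm (x - y) powr a) \<in> borel_measurable borel"
proof (rule powr_real_measurable)
  show "(\<lambda>y::'a. norm (x - y)) \<in> borel_measurable borel"
    by (intro borel_measurable_continuous_onI continuous_intros)
qed simp

lemma meas_ball[measurable]: "ball (x::'a::euclidean_space) r \<in> sets borel" "cball x r \<in> sets borel"
  by auto

lemma integrable_outer_pow:
  fixes x :: "'a::euclidean_space"
  assumes s: "real DIM('a) < s" and e: "0 < \<epsilon>"
  shows "integrable lborel (\<lambda>y. indicator (- ball x \<epsilon>) y * norm (x - y) powr (-s))"
proof (rule integrableI_bounded)
  show "(\<lambda>y. indicator (- ball x \<epsilon>) y * norm (x - y) powr (-s)) \<in> borel_measurable lborel"
    by measurable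
  have "(\<integral>\<^sup>+y. ennreal (norm (indicator (- ball x \<epsilon>) y * norm (x - y) powr (-s))) \<partial>lborel)
      = (\<integral>\<^sup>+y. indicator (- ball x \<epsilon>) y * ennreal (norm (x - y) powr (- s)) \<partial>lborel)"
    by (intro nn_integral_cong) (auto simp: indicator_def)
  also have "\<dots> < \<infinity>" by (rule outer_nn[OF s e])
  finally show "(\<integral>\<^sup>+y. ennreal (norm (indicator (- ball x \<epsilon>) y * norm (x - y) powr (-s))) \<partial>lborel) < \<infinity>" .
qed

lemma setint_outer:
  fixes x :: "'a::euclidean_space" and F :: "'a \<Rightarrow> real"
  assumes s: "real DIM('a) < s" and e: "0 < \<epsilon>" and F: "F \<in> borel_measurable lborel"
    and b: "\<And>y. y \<notin> ball x \<epsilon> \<Longrightarrow> \<bar>F y\<bar> \<le> M * norm (x - y) powr (-s)"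
  shows "set_integrable lborel (- ball x \<epsilon>) F"
  unfolding set_integrable_def
proof (rule Bochner_Integration.integrable_bound)
  show "integrable lborel (\<lambda>y. M * (indicator (- ball x \<epsilon>) y * norm (x - y) powr (-s)))"
    by (intro integrable_mult_right integrable_outer_pow s e)
  show "(\<lambda>y. indicator (- ball x \<epsilon>) y *\<^sub>R F y) \<in> borel_measurable lborel"
    using F by measurable
  show "AE y in lborel. norm (indicator (- ball x \<epsilon>) y *\<^sub>R F y) \<le> norm (M * (indicator (- ball x \<epsilon>) y * norm (x - y) powr (-s)))"
    using b by (intro AE_I2) (auto simp: indicator_def intro: order_trans[OF _ abs_ge_self])
qed

lemma setint_inner:
  fixes x :: "'a::euclidean_space" and F :: "'a \<Rightarrow> real"
  assumes t: "0 \<le> \<tau>" "\<tau> < real DIM('a)" and R: "0 < R" and F: "F \<in> borel_measurable lborel"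
    and K: "\<forall>R>0. \<forall>x::'a. (\<integral>\<^sup>+y. indicator (ball x R) y * ennreal (norm (x - y) powr (- \<tau>)) \<partial>lborel)
            \<le> ennreal (K * R powr (real DIM('a) - \<tau>))" "0 \<le> K"
    and M: "0 \<le> M"
    and b: "\<And>y. y \<in> ball x R \<Longrightarrow> \<bar>F y\<bar> \<le> M * norm (x - y) powr (-\<tau>)"
  shows "set_integrable lborel (ball x R) F"
    and "\<bar>LINT y : ball x R | lborel. F y\<bar> \<le> M * (K * R powr (real DIM('a) - \<tau>))"
proof -
  let ?g = "\<lambda>y. indicator (ball x R) y * norm (x - y) powr (-\<tau>)"
  have nn: "(\<integral>\<^sup>+y. ennreal (?g y) \<partial>lborel) \<le> ennreal (K * R powr (real DIM('a) - \<tau>))"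
  proof -
    have "(\<integral>\<^sup>+y. ennreal (?g y) \<partial>lborel)
      = (\<integral>\<^sup>+y. indicator (ball x R) y * ennreal (norm (x - y) powr (- \<tau>)) \<partial>lborel)"
      by (intro nn_integral_cong) (auto simp: indicator_def)
    also have "\<dots> \<le> ennreal (K * R powr (real DIM('a) - \<tau>))" using K R by blast
    finally show ?thesis .
  qed
  have gint: "integrable lborel ?g"
  proof (rule integrableI_bounded)
    show "?g \<in> borel_measurable lborel" by measurable
    have "(\<integral>\<^sup>+y. ennreal (norm (?g y)) \<partial>lborel) = (\<integral>\<^sup>+y. ennreal (?g y) \<partial>lborel)"
      by (intro nn_integral_cong) (auto simp: indicator_def)
    also have "\<dots> < \<infinity>" using nn by (simp add: le_less_trans)
    finally show "(\<integral>\<^sup>+y. ennreal (norm (?g y)) \<partial>lborel) < \<infinity>" .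
  qed
  have gle: "integral\<^sup>L lborel ?g \<le> K * R powr (real DIM('a) - \<tau>)"
  proof -
    have "ennreal (integral\<^sup>L lborel ?g) = (\<integral>\<^sup>+y. ennreal (?g y) \<partial>lborel)"
      by (rule nn_integral_eq_integral[OF gint, symmetric]) (auto intro!: AE_I2)
    then have "ennreal (integral\<^sup>L lborel ?g) \<le> ennreal (K * R powr (real DIM('a) - \<tau>))" using nn by simp
    then show ?thesis using K(2) by (simp add: ennreal_le_iff)
  qed
  have fint: "integrable lborel (\<lambda>y. indicator (ball x R) y *\<^sub>R F y)"
  proof (rule Bochner_Integration.integrable_bound)
    show "integrable lborel (\<lambda>y. M * ?g y)" by (intro integrable_mult_right gint)
    show "(\<lambda>y. indicator (ball x R) y *\<^sub>R F y) \<in> borel_measurable lborel"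
      using F by measurable
    show "AE y in lborel. norm (indicator (ball x R) y *\<^sub>R F y) \<le> norm (M * ?g y)"
      using b M by (intro AE_I2) (auto simp: indicator_def)
  qed
  then show "set_integrable lborel (ball x R) F" unfolding set_integrable_def .
  have "\<bar>LINT y : ball x R | lborel. F y\<bar> \<le> (LINT y | lborel. norm (indicator (ball x R) y *\<^sub>R F y))"
    unfolding set_lebesgue_integral_def using integral_norm_bound[of lborel "\<lambda>y. indicator (ball x R) y *\<^sub>R F y"]
    by simp
  also have "\<dots> \<le> (LINT y | lborel. M * ?g y)"
    by (rule integral_mono) (use fint gint b in \<open>auto simp: indicator_def\<close>)
  also have "\<dots> = M * integral\<^sup>L lborel ?g" by simp
  also have "\<dots> \<le> M * (K * R powr (real DIM('a) - \<tau>))" using gle M by (intro mult_left_mono) auto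
  finally show "\<bar>LINT y : ball x R | lborel. F y\<bar> \<le> M * (K * R powr (real DIM('a) - \<tau>))" .
qed

lemma integral_reflect:
  fixes x :: "'a::euclidean_space" and I :: "'a \<Rightarrow> real"
  assumes I: "I \<in> borel_measurable borel"
  shows "(LINT y | lborel. I (2 *\<^sub>R x - y)) = (LINT y | lborel. I y)"
proof -
  define T where "T y = 2 *\<^sub>R x + (-1) *\<^sub>R y" for y :: 'a
  have "lborel = density (distr lborel borel T) (\<lambda>_. \<bar>-1::real\<bar> ^ DIM('a))"
    unfolding T_def[abs_def] by (rule lborel_affine) simp
  then have eq: "distr lborel borel T = lborel" by (simp add: density_1)
  have "(LINT y | lborel. I y) = integral\<^sup>L (distr lborel borel T) I" by (simp add: eq)
  also have "\<dots> = (LINT y | lborel. I (T y))"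
    by (rule integral_distr) (auto simp: T_def[abs_def] I)
  finally show ?thesis by (simp add: T_def)
qed

lemma taylor_C1beta:
  fixes f :: "'a::euclidean_space \<Rightarrow> real" and g :: "'a \<Rightarrow> 'a"
  assumes der: "\<And>z. z \<in> cball x r \<Longrightarrow> (f has_derivative (\<lambda>h. g z \<bullet> h)) (at z)"
    and hol: "\<And>z. z \<in> cball x r \<Longrightarrow> norm (g z - g x) \<le> C * dist z x powr \<beta>"
    and b: "0 \<le> \<beta>" and y: "y \<in> cball x r"
  shows "\<bar>f y - f x - g x \<bullet> (y - x)\<bar> \<le> \<bar>C\<bar> * norm (y - x) powr \<beta> * norm (y - x)"
proof -
  define \<rho> where "\<rho> = norm (y - x)"
  have sub: "cball x \<rho> \<subseteq> cball x r" using y by (auto simp: \<rho>_def dist_norm norm_minus_commute)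
  define h where "h z = f z - g x \<bullet> z" for z
  have "norm (h y - h x) \<le> (\<bar>C\<bar> * \<rho> powr \<beta>) * norm (y - x)"
  proof (rule differentiable_bound[of "cball x \<rho>" h "\<lambda>z k. g z \<bullet> k - g x \<bullet> k"])
    show "convex (cball x \<rho>)" by simp
    fix z assume z: "z \<in> cball x \<rho>"
    then have zr: "z \<in> cball x r" using sub by auto
    show "(h has_derivative (\<lambda>k. g z \<bullet> k - g x \<bullet> k)) (at z within cball x \<rho>)"
    proof -
      have d1: "(f has_derivative (\<lambda>h. g z \<bullet> h)) (at z within cball x \<rho>)"
        using der[OF zr] by (rule has_derivative_at_withinI)
      have d2: "((\<lambda>z. g x \<bullet> z) has_derivative (\<lambda>k. g x \<bullet> k)) (at z within cball x \<rho>)"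
        by (rule bounded_linear_imp_has_derivative) (rule bounded_linear_inner_right)
      show ?thesis unfolding h_def[abs_def] by (rule has_derivative_diff[OF d1 d2])
    qed
    show "onorm (\<lambda>k. g z \<bullet> k - g x \<bullet> k) \<le> \<bar>C\<bar> * \<rho> powr \<beta>"
    proof (rule onorm_le)
      fix k
      have "norm (g z \<bullet> k - g x \<bullet> k) = \<bar>(g z - g x) \<bullet> k\<bar>" by (simp add: inner_diff_left)
      also have "\<dots> \<le> norm (g z - g x) * norm k" by (rule Cauchy_Schwarz_ineq2)
      also have "norm (g z - g x) \<le> \<bar>C\<bar> * \<rho> powr \<beta>"
      proof -
        have "dist z x \<le> \<rho>" using z by (simp add: dist_commute)
        then have "dist z x powr \<beta> \<le> \<rho> powr \<beta>" using b by (intro powr_mono2) auto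
        then have "C * dist z x powr \<beta> \<le> \<bar>C\<bar> * \<rho> powr \<beta>"
          by (meson abs_ge_self mult_mono order.trans powr_ge_zero abs_ge_zero order_refl)
        then show ?thesis using hol[OF zr] by linarith
      qed
      then have "norm (g z - g x) * norm k \<le> \<bar>C\<bar> * \<rho> powr \<beta> * norm k"
        by (intro mult_right_mono) auto
      finally show "norm (g z \<bullet> k - g x \<bullet> k) \<le> \<bar>C\<bar> * \<rho> powr \<beta> * norm k" .
    qed
  qed (auto simp: \<rho>_def dist_norm norm_minus_commute)
  then show ?thesis unfolding h_def \<rho>_def by (simp add: inner_diff_right)
qed

lemma two_x_minus: "x - (2 *\<^sub>R x - y) = y - (x::'a::real_vector)"
  by (simp add: scaleR_2 algebra_simps)

lemma PV_exists:
  fixes f :: "'a::euclidean_space \<Rightarrow> real" and x :: 'a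
  assumes N: "N \<ge> 2" and dim: "DIM('a) = N - 1" and \<alpha>: "0 < \<alpha>" and \<beta>: "\<alpha> < \<beta>" "\<beta> < 1"
    and \<Omega>: "open \<Omega>" "x \<in> \<Omega>" and f: "C1beta_loc \<beta> \<Omega> f" "continuous_on UNIV f"
  shows "\<exists>L. ((\<lambda>\<epsilon>. LINT y : - ball x \<epsilon> | lborel. Psi N \<alpha> (pquot f x y) / norm (x - y) powr (real N - 1 + \<alpha>)) \<longlongrightarrow> L) (at_right 0)"
proof -
  have Na: "real N + \<alpha> \<ge> 2" using N \<alpha> by simp
  define s where "s = real N - 1 + \<alpha>"
  have rd: "real DIM('a) = real N - 1" using dim N by simp
  have sd: "real DIM('a) < s" unfolding s_def rd using \<alpha> by simp
  define \<tau> where "\<tau> = s - \<beta>"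
  have \<tau>: "0 \<le> \<tau>" "\<tau> < real DIM('a)" unfolding \<tau>_def s_def rd using N \<alpha> \<beta> by auto
  have d\<tau>: "real DIM('a) - \<tau> = \<beta> - \<alpha>" unfolding \<tau>_def s_def rd by simp
  obtain K where K: "K \<ge> 0" "\<forall>R>0. \<forall>x::'a. (\<integral>\<^sup>+y. indicator (ball x R) y * ennreal (norm (x - y) powr (- \<tau>)) \<partial>lborel)
            \<le> ennreal (K * R powr (real DIM('a) - \<tau>))"
    using inner_nn[OF \<tau>] by blast
  define M where "M = integral UNIV (phi N \<alpha>)"
  have Mb: "\<bar>Psi N \<alpha> p\<bar> \<le> M" for p unfolding M_def by (rule Psi_bound[OF Na])
  have M0: "0 \<le> M" using Mb[of 0] by simp
  obtain g :: "'a \<Rightarrow> 'a" where gder0: "\<forall>z\<in>\<Omega>. (f has_derivative (\<lambda>h. g z \<bullet> h)) (at z)"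
    and ghol0: "\<forall>Q. compact Q \<and> Q \<subseteq> \<Omega> \<longrightarrow> (\<exists>C. \<forall>x\<in>Q. \<forall>y\<in>Q. norm (g x - g y) \<le> C * dist x y powr \<beta>)"
    using f(1) unfolding C1beta_loc_def by (elim exE conjE) (rule that)
  have gder: "\<And>z. z \<in> \<Omega> \<Longrightarrow> (f has_derivative (\<lambda>h. g z \<bullet> h)) (at z)" using gder0 by blast
  have ghol: "\<And>Q. compact Q \<Longrightarrow> Q \<subseteq> \<Omega> \<Longrightarrow> \<exists>C. \<forall>x\<in>Q. \<forall>y\<in>Q. norm (g x - g y) \<le> C * dist x y powr \<beta>"
    using ghol0 by blast
  obtain r where r: "0 < r" "cball x r \<subseteq> \<Omega>" using \<Omega> open_contains_cball by blast
  obtain C where C: "\<forall>z\<in>cball x r. \<forall>w\<in>cball x r. norm (g z - g w) \<le> C * dist z w powr \<beta>"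
    using ghol[of "cball x r"] r by auto
  have tay: "\<bar>f y - f x - g x \<bullet> (y - x)\<bar> \<le> \<bar>C\<bar> * norm (y - x) powr \<beta> * norm (y - x)"
    if "y \<in> cball x r" for y
    by (rule taylor_C1beta[OF gder]) (use r C that \<alpha> \<beta> in auto)
  have [measurable]: "f \<in> borel_measurable borel" by (rule borel_measurable_continuous_onI[OF f(2)])
  have [measurable]: "Psi N \<alpha> \<in> borel_measurable borel" by (rule Psi_meas[OF Na])
  define G where "G y = Psi N \<alpha> (pquot f x y) / norm (x - y) powr s" for y
  define e where "e y = (g x \<bullet> (y - x)) / norm (x - y)" for y
  define K0 where "K0 y = indicator (ball x r) y * (Psi N \<alpha> (e y) / norm (x - y) powr s)" for y
  define H where "H y = G y - K0 y" for y
  have mG[measurable]: "G \<in> borel_measurable borel"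
    unfolding G_def[abs_def] pquot_def by measurable
  have mK0[measurable]: "K0 \<in> borel_measurable borel"
    unfolding K0_def[abs_def] e_def[abs_def] by measurable
  have mH[measurable]: "H \<in> borel_measurable borel"
    unfolding H_def[abs_def] by measurable
  have powinv: "1 / norm (x - y) powr s = norm (x - y) powr (- s)" for y
    by (simp add: powr_minus divide_inverse)
  have bG: "\<bar>G y\<bar> \<le> M * norm (x - y) powr (- s)" for y
  proof -
    have "\<bar>G y\<bar> = \<bar>Psi N \<alpha> (pquot f x y)\<bar> * (1 / norm (x - y) powr s)"
      unfolding G_def by (simp add: abs_mult)
    also have "\<dots> \<le> M * (1 / norm (x - y) powr s)" by (intro mult_right_mono Mb) auto
    finally show ?thesis unfolding powinv .
  qed
  have bK0: "\<bar>K0 y\<bar> \<le> M * norm (x - y) powr (- s)" for y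
  proof -
    have "\<bar>K0 y\<bar> \<le> \<bar>Psi N \<alpha> (e y)\<bar> * (1 / norm (x - y) powr s)"
      unfolding K0_def by (auto simp: abs_mult indicator_def)
    also have "\<dots> \<le> M * (1 / norm (x - y) powr s)" by (intro mult_right_mono Mb) auto
    finally show ?thesis unfolding powinv .
  qed
  have bH_in: "\<bar>H y\<bar> \<le> (2 * \<bar>C\<bar>) * norm (x - y) powr (- \<tau>)" if y: "y \<in> ball x r" for y
  proof (cases "y = x")
    case True then show ?thesis by (simp add: H_def G_def K0_def pquot_def e_def)
  next
    case False
    define n where "n = norm (x - y)"
    have n: "0 < n" using False by (simp add: n_def)
    have "H y = (Psi N \<alpha> (pquot f x y) - Psi N \<alpha> (e y)) / n powr s"
      using y unfolding H_def G_def K0_def n_def by (simp add: diff_divide_distrib)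
    then have "\<bar>H y\<bar> = \<bar>Psi N \<alpha> (pquot f x y) - Psi N \<alpha> (e y)\<bar> / n powr s"
      by simp
    also have "\<dots> \<le> 2 * \<bar>pquot f x y - e y\<bar> / n powr s"
      by (intro divide_right_mono Psi_lip[OF Na]) auto
    also have "pquot f x y - e y = (f y - f x - g x \<bullet> (y - x)) / n"
      unfolding pquot_def e_def n_def by (simp add: diff_divide_distrib)
    also have "\<bar>(f y - f x - g x \<bullet> (y - x)) / n\<bar> \<le> \<bar>C\<bar> * n powr \<beta>"
    proof -
      have "\<bar>f y - f x - g x \<bullet> (y - x)\<bar> \<le> \<bar>C\<bar> * n powr \<beta> * n"
        using tay[of y] y by (simp add: n_def norm_minus_commute)
      then show ?thesis using n by (simp add: divide_le_eq)
    qed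
    then have "2 * \<bar>(f y - f x - g x \<bullet> (y - x)) / n\<bar> / n powr s \<le> 2 * (\<bar>C\<bar> * n powr \<beta>) / n powr s"
      using n by (intro divide_right_mono mult_left_mono) auto
    also have "2 * (\<bar>C\<bar> * n powr \<beta>) / n powr s = (2 * \<bar>C\<bar>) * n powr (- \<tau>)"
      using n unfolding \<tau>_def by (simp add: powr_diff powr_minus divide_inverse)
    finally show ?thesis by (simp add: n_def)
  qed
  have H_out: "H y = G y" if "y \<notin> ball x r" for y
    using that unfolding H_def K0_def by simp
  have intH_in: "set_integrable lborel (ball x R) H" if "0 < R" "R \<le> r" for R
    using setint_inner(1)[OF \<tau> that(1) _ K(2) K(1), of H "2 * \<bar>C\<bar>" x] bH_in that by auto
  have intH_out: "set_integrable lborel (- ball x r) H"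
    by (rule setint_outer[OF sd r(1), of H x M]) (use bG H_out in auto)
  have intH: "integrable lborel H"
  proof -
    have "set_integrable lborel (ball x r \<union> - ball x r) H"
      by (rule set_integrable_Un[OF intH_in[OF r(1) order_refl] intH_out]) auto
    then show ?thesis by (simp add: set_integrable_def)
  qed
  define L where "L = (LINT y | lborel. H y)"
  have key: "\<bar>(LINT y : - ball x \<epsilon> | lborel. G y) - L\<bar> \<le> 2 * \<bar>C\<bar> * (K * \<epsilon> powr (\<beta> - \<alpha>))"
    if e: "0 < \<epsilon>" "\<epsilon> \<le> r" for \<epsilon>
  proof -
    have iG: "set_integrable lborel (- ball x \<epsilon>) G"
      by (rule setint_outer[OF sd e(1), of G x M]) (use bG in auto)
    have iK0: "set_integrable lborel (- ball x \<epsilon>) K0"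
      by (rule setint_outer[OF sd e(1), of K0 x M]) (use bK0 in auto)
    have iHo: "set_integrable lborel (- ball x \<epsilon>) H"
      unfolding set_integrable_def using integrable_mult_indicator[OF _ intH, of "- ball x \<epsilon>"] by simp
    have iHi: "set_integrable lborel (ball x \<epsilon>) H" by (rule intH_in[OF e])
    have K0z: "(LINT y : - ball x \<epsilon> | lborel. K0 y) = 0"
    proof -
      define I where "I y = indicator (- ball x \<epsilon>) y * K0 y" for y
      have [measurable]: "I \<in> borel_measurable borel" unfolding I_def[abs_def] by measurable
      have refl: "I (2 *\<^sub>R x - y) = - I y" for y
      proof -
        have d: "dist x (2 *\<^sub>R x - y) = dist x y"
          by (simp add: dist_norm two_x_minus norm_minus_commute)
        have n: "norm (x - (2 *\<^sub>R x - y)) = norm (x - y)"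
          by (simp add: two_x_minus norm_minus_commute)
        have ee: "e (2 *\<^sub>R x - y) = - e y"
        proof -
          have h: "2 *\<^sub>R x - y - x = - (y - x)" by (simp add: scaleR_2 algebra_simps)
          show ?thesis unfolding e_def n h inner_minus_right by simp
        qed
        show ?thesis unfolding I_def K0_def ee n Psi_odd by (simp add: indicator_def d)
      qed
      have "(LINT y | lborel. I y) = (LINT y | lborel. I (2 *\<^sub>R x - y))"
        by (rule integral_reflect[symmetric]) measurable
      also have "\<dots> = - (LINT y | lborel. I y)" unfolding refl by simp
      finally have "(LINT y | lborel. I y) = 0" by simp
      then show ?thesis unfolding set_lebesgue_integral_def I_def by simp
    qed
    have eq1: "(LINT y : - ball x \<epsilon> | lborel. G y) = (LINT y : - ball x \<epsilon> | lborel. H y)"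
    proof -
      have "(LINT y : - ball x \<epsilon> | lborel. H y) = (LINT y : - ball x \<epsilon> | lborel. G y) - (LINT y : - ball x \<epsilon> | lborel. K0 y)"
        unfolding H_def by (rule set_integral_diff(2)[OF iG iK0])
      then show ?thesis using K0z by simp
    qed
    have eq2: "L = (LINT y : ball x \<epsilon> | lborel. H y) + (LINT y : - ball x \<epsilon> | lborel. H y)"
    proof -
      have "(LINT y : ball x \<epsilon> \<union> - ball x \<epsilon> | lborel. H y) = (LINT y : ball x \<epsilon> | lborel. H y) + (LINT y : - ball x \<epsilon> | lborel. H y)"
        by (rule set_integral_Un[OF _ iHi iHo]) auto
      then show ?thesis unfolding L_def set_lebesgue_integral_def by simp
    qed
    have bi: "\<bar>LINT y : ball x \<epsilon> | lborel. H y\<bar> \<le> 2 * \<bar>C\<bar> * (K * \<epsilon> powr (real DIM('a) - \<tau>))"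
      using setint_inner(2)[OF \<tau> e(1) _ K(2) K(1), of H "2 * \<bar>C\<bar>" x] bH_in e by auto
    show ?thesis using bi unfolding eq1 eq2 d\<tau> by simp
  qed
  have lim0: "((\<lambda>\<epsilon>::real. 2 * \<bar>C\<bar> * (K * \<epsilon> powr (\<beta> - \<alpha>))) \<longlongrightarrow> 0) (at_right 0)"
  proof -
    have "((\<lambda>\<epsilon>::real. \<epsilon> powr (\<beta> - \<alpha>)) \<longlongrightarrow> 0) (at_right 0)"
      by (rule tendsto_zero_powrI) (auto intro!: tendsto_ident_at eventually_at_rightI[of 0 1] simp: \<beta>)
    then have "((\<lambda>\<epsilon>::real. (2 * \<bar>C\<bar> * K) * \<epsilon> powr (\<beta> - \<alpha>)) \<longlongrightarrow> (2 * \<bar>C\<bar> * K) * 0) (at_right 0)"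
      by (intro tendsto_mult tendsto_const)
    then show ?thesis by (simp add: mult_ac)
  qed
  have "((\<lambda>\<epsilon>. (LINT y : - ball x \<epsilon> | lborel. G y) - L) \<longlongrightarrow> 0) (at_right 0)"
  proof (rule Lim_null_comparison[OF _ lim0])
    show "\<forall>\<^sub>F \<epsilon> in at_right 0. norm ((LINT y : - ball x \<epsilon> | lborel. G y) - L) \<le> 2 * \<bar>C\<bar> * (K * \<epsilon> powr (\<beta> - \<alpha>))"
      using key r(1) by (intro eventually_at_rightI[of 0 r]) auto
  qed
  then have "((\<lambda>\<epsilon>. LINT y : - ball x \<epsilon> | lborel. G y) \<longlongrightarrow> L) (at_right 0)"
    by (rule LIM_zero_cancel)
  then show ?thesis unfolding G_def s_def by blast
qed

lemma NMC_tendsto: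
  fixes f :: "'a::euclidean_space \<Rightarrow> real" and x :: 'a
  assumes N: "N \<ge> 2" and dim: "DIM('a) = N - 1" and \<alpha>: "0 < \<alpha>" and \<beta>: "\<alpha> < \<beta>" "\<beta> < 1"
    and \<Omega>: "open \<Omega>" "x \<in> \<Omega>" and f: "C1beta_loc \<beta> \<Omega> f" "continuous_on UNIV f"
  shows "((\<lambda>\<epsilon>. LINT y : - ball x \<epsilon> | lborel. Psi N \<alpha> (pquot f x y) / norm (x - y) powr (real N - 1 + \<alpha>)) \<longlongrightarrow> NMC N \<alpha> f x) (at_right 0)"
proof -
  obtain L where L: "((\<lambda>\<epsilon>. LINT y : - ball x \<epsilon> | lborel. Psi N \<alpha> (pquot f x y) / norm (x - y) powr (real N - 1 + \<alpha>)) \<longlongrightarrow> L) (at_right 0)"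
    using PV_exists[OF assms] by blast
  have "NMC N \<alpha> f x = Lim (at_right 0) (\<lambda>\<epsilon>. LINT y : - ball x \<epsilon> | lborel. Psi N \<alpha> (pquot f x y) / norm (x - y) powr (real N - 1 + \<alpha>))"
    unfolding NMC_def Psi_def by simp
  also have "\<dots> = L" by (rule tendsto_Lim[OF _ L]) simp
  finally show ?thesis using L by simp
qed

lemma G_setint:
  fixes f :: "'a::euclidean_space \<Rightarrow> real" and x :: 'a
  assumes N: "N \<ge> 2" and dim: "DIM('a) = N - 1" and \<alpha>: "0 < \<alpha>" and e: "0 < \<epsilon>"
    and f: "continuous_on UNIV f"
  shows "set_integrable lborel (- ball x \<epsilon>) (\<lambda>y. Psi N \<alpha> (pquot f x y) / norm (x - y) powr (real N - 1 + \<alpha>))"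
proof -
  have Na: "real N + \<alpha> \<ge> 2" using N \<alpha> by simp
  define s where "s = real N - 1 + \<alpha>"
  have rd: "real DIM('a) = real N - 1" using dim N by simp
  have sd: "real DIM('a) < s" unfolding s_def rd using \<alpha> by simp
  define M where "M = integral UNIV (phi N \<alpha>)"
  have Mb: "\<bar>Psi N \<alpha> p\<bar> \<le> M" for p unfolding M_def by (rule Psi_bound[OF Na])
  have [measurable]: "f \<in> borel_measurable borel" by (rule borel_measurable_continuous_onI[OF f])
  have [measurable]: "Psi N \<alpha> \<in> borel_measurable borel" by (rule Psi_meas[OF Na])
  have powinv: "1 / norm (x - y) powr s = norm (x - y) powr (- s)" for y
    by (simp add: powr_minus divide_inverse)
  have bG: "\<bar>Psi N \<alpha> (pquot f x y) / norm (x - y) powr s\<bar> \<le> M * norm (x - y) powr (- s)" for y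
  proof -
    have "\<bar>Psi N \<alpha> (pquot f x y) / norm (x - y) powr s\<bar> = \<bar>Psi N \<alpha> (pquot f x y)\<bar> * (1 / norm (x - y) powr s)"
      by (simp add: abs_mult)
    also have "\<dots> \<le> M * (1 / norm (x - y) powr s)" by (intro mult_right_mono Mb) auto
    finally show ?thesis unfolding powinv .
  qed
  show ?thesis unfolding s_def[symmetric]
    by (rule setint_outer[OF sd e, of _ x M]) (use bG in \<open>auto simp: pquot_def\<close>)
qed

lemma W_eq:
  fixes u v :: "'a::euclidean_space \<Rightarrow> real"
  assumes Na: "real N + \<alpha> \<ge> 2"
  shows "((u x - v x) - (u y - v y)) / norm (x - y) powr (real N + \<alpha>) * qtilde N \<alpha> u v x y
     = Psi N \<alpha> (pquot u x y) / norm (x - y) powr (real N - 1 + \<alpha>) - Psi N \<alpha> (pquot v x y) / norm (x - y) powr (real N - 1 + \<alpha>)"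
proof (cases "y = x")
  case True then show ?thesis by (simp add: pquot_def Psi_0)
next
  case False
  define n where "n = norm (x - y)"
  have n: "0 < n" using False by (simp add: n_def)
  define a where "a = pquot v x y"
  define b where "b = pquot u x y"
  define I where "I = integral {0..1} (\<lambda>\<rho>. Fnl' N \<alpha> (a + \<rho> * (b - a)))"
  have pw: "pquot (\<lambda>z. u z - v z) x y = b - a"
    unfolding a_def b_def pquot_def by (simp add: diff_divide_distrib)
  have q: "qtilde N \<alpha> u v x y = -2 * I"
    unfolding qtilde_def pw I_def a_def by simp
  have ps: "Psi N \<alpha> b - Psi N \<alpha> a = (b - a) * (2 * I)"
    unfolding I_def by (rule Psi_diff[OF Na])
  have num: "(u x - v x) - (u y - v y) = - (b - a) * n"
    unfolding a_def b_def pquot_def n_def using n by (simp add: field_simps n_def)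
  have den: "n powr (real N + \<alpha>) = n * n powr (real N - 1 + \<alpha>)"
  proof -
    have "n powr (real N + \<alpha>) = n powr (1 + (real N - 1 + \<alpha>))" by simp
    also have "\<dots> = n powr 1 * n powr (real N - 1 + \<alpha>)" by (rule powr_add)
    also have "\<dots> = n * n powr (real N - 1 + \<alpha>)" using n by simp
    finally show ?thesis .
  qed
  have "((u x - v x) - (u y - v y)) / norm (x - y) powr (real N + \<alpha>) * qtilde N \<alpha> u v x y
      = (- (b - a) * n) / (n * n powr (real N - 1 + \<alpha>)) * (-2 * I)"
    unfolding num q n_def[symmetric] den ..
  also have "\<dots> = (b - a) * (2 * I) / n powr (real N - 1 + \<alpha>)"
    using n by (simp add: field_simps)
  also have "\<dots> = (Psi N \<alpha> b - Psi N \<alpha> a) / n powr (real N - 1 + \<alpha>)" unfolding ps ..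
  finally show ?thesis unfolding a_def b_def n_def by (simp add: diff_divide_distrib)
qed

lemma qtilde_pos:
  assumes Na: "real N + \<alpha> \<ge> 2"
  shows "0 < qtilde N \<alpha> u v x y"
proof -
  have "qtilde N \<alpha> u v x y = 2 * integral {0..1} (\<lambda>\<rho>. phi N \<alpha> (pquot v x y + \<rho> * pquot (\<lambda>z. u z - v z) x y))"
    unfolding qtilde_def Fnl'_phi by simp
  then show ?thesis using int_phi_bounds(3)[OF Na] by simp
qed

theorem mainTheorem3:
  fixes N :: nat and \<alpha> \<beta> :: real and \<Omega> :: "'a::euclidean_space set"
    and u v :: "'a \<Rightarrow> real"
  assumes N: "N \<ge> 2" and dim: "DIM('a) = N - 1"
    and \<alpha>: "0 < \<alpha>" "\<alpha> < 1" and \<beta>: "\<alpha> < \<beta>" "\<beta> < 1"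
    and \<Omega>: "open \<Omega>"
    and u: "C1beta_loc \<beta> \<Omega> u" "continuous_on UNIV u"
    and v: "C1beta_loc \<beta> \<Omega> v" "continuous_on UNIV v"
  shows "(\<forall>x\<in>\<Omega>.
           ((\<lambda>\<epsilon>. LINT y : - ball x \<epsilon> | lborel.
               ((u x - v x) - (u y - v y)) / norm (x - y) powr (real N + \<alpha>) * qtilde N \<alpha> u v x y)
             \<longlongrightarrow> NMC N \<alpha> u x - NMC N \<alpha> v x) (at_right 0))
       \<and> ((\<forall>x\<in>\<Omega>. NMC N \<alpha> u x - NMC N \<alpha> v x \<ge> 0) \<and> (\<forall>y. y \<notin> \<Omega> \<longrightarrow> u y \<ge> v y)
           \<longrightarrow> (\<forall>x0\<in>\<Omega>. (\<forall>y. u y - v y \<ge> u x0 - v x0) \<longrightarrow> (\<exists>c. \<forall>y. u y - v y = c)))"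
proof -
  have Na: "real N + \<alpha> \<ge> 2" using N \<alpha> by simp
  define W where "W x y = ((u x - v x) - (u y - v y)) / norm (x - y) powr (real N + \<alpha>) * qtilde N \<alpha> u v x y" for x y
  define Gu where "Gu x y = Psi N \<alpha> (pquot u x y) / norm (x - y) powr (real N - 1 + \<alpha>)" for x y
  define Gv where "Gv x y = Psi N \<alpha> (pquot v x y) / norm (x - y) powr (real N - 1 + \<alpha>)" for x y
  have Weq: "W x = (\<lambda>y. Gu x y - Gv x y)" for x
    unfolding W_def Gu_def Gv_def by (rule ext) (rule W_eq[OF Na])
  have intA: "set_integrable lborel (- ball x \<epsilon>) (W x)"
    and eqA: "(LINT y : - ball x \<epsilon> | lborel. W x y) = (LINT y : - ball x \<epsilon> | lborel. Gu x y) - (LINT y : - ball x \<epsilon> | lborel. Gv x y)"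
    if "0 < \<epsilon>" for x \<epsilon>
  proof -
    have iu: "set_integrable lborel (- ball x \<epsilon>) (Gu x)"
      unfolding Gu_def by (rule G_setint[OF N dim \<alpha>(1) that u(2)])
    have iv: "set_integrable lborel (- ball x \<epsilon>) (Gv x)"
      unfolding Gv_def by (rule G_setint[OF N dim \<alpha>(1) that v(2)])
    show "set_integrable lborel (- ball x \<epsilon>) (W x)" unfolding Weq by (rule set_integral_diff(1)[OF iu iv])
    show "(LINT y : - ball x \<epsilon> | lborel. W x y) = (LINT y : - ball x \<epsilon> | lborel. Gu x y) - (LINT y : - ball x \<epsilon> | lborel. Gv x y)"
      unfolding Weq by (rule set_integral_diff(2)[OF iu iv])
  qed
  have part1: "((\<lambda>\<epsilon>. LINT y : - ball x \<epsilon> | lborel. W x y) \<longlongrightarrow> NMC N \<alpha> u x - NMC N \<alpha> v x) (at_right 0)"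
    if x: "x \<in> \<Omega>" for x
  proof -
    have lu: "((\<lambda>\<epsilon>. LINT y : - ball x \<epsilon> | lborel. Gu x y) \<longlongrightarrow> NMC N \<alpha> u x) (at_right 0)"
      unfolding Gu_def by (rule NMC_tendsto[OF N dim \<alpha>(1) \<beta> \<Omega> x u])
    have lv: "((\<lambda>\<epsilon>. LINT y : - ball x \<epsilon> | lborel. Gv x y) \<longlongrightarrow> NMC N \<alpha> v x) (at_right 0)"
      unfolding Gv_def by (rule NMC_tendsto[OF N dim \<alpha>(1) \<beta> \<Omega> x v])
    have "eventually (\<lambda>\<epsilon>. (LINT y : - ball x \<epsilon> | lborel. Gu x y) - (LINT y : - ball x \<epsilon> | lborel. Gv x y)
           = (LINT y : - ball x \<epsilon> | lborel. W x y)) (at_right 0)"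
      using eventually_at_right_less[of 0] by eventually_elim (simp add: eqA)
    then show ?thesis by (rule Lim_transform_eventually[OF tendsto_diff[OF lu lv]])
  qed
  have part2: "\<exists>c. \<forall>y. u y - v y = c"
    if hyp: "\<forall>x\<in>\<Omega>. NMC N \<alpha> u x - NMC N \<alpha> v x \<ge> 0" and x0: "x0 \<in> \<Omega>"
      and mn: "\<forall>y. u y - v y \<ge> u x0 - v x0" for x0
  proof (rule exI[of _ "u x0 - v x0"], rule allI, rule ccontr)
    fix y1 assume ne: "u y1 - v y1 \<noteq> u x0 - v x0"
    define w where "w y = u y - v y" for y
    have gt: "w x0 < w y1" using ne mn unfolding w_def by (metis order_le_less)
    have y1x0: "y1 \<noteq> x0" using ne by auto
    have wc: "continuous_on UNIV w" unfolding w_def[abs_def] by (intro continuous_intros u(2) v(2))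
    have U: "open {y. w x0 < w y}" by (rule open_Collect_less) (auto intro: wc)
    obtain \<rho> where \<rho>: "0 < \<rho>" "ball y1 \<rho> \<subseteq> {y. w x0 < w y}"
      using U gt open_contains_ball by blast
    define \<delta> where "\<delta> = dist x0 y1 / 2"
    have \<delta>: "0 < \<delta>" unfolding \<delta>_def using y1x0 by simp
    define B where "B = ball y1 (min \<rho> \<delta>)"
    have BU: "w x0 < w y" if "y \<in> B" for y using that \<rho>(2) unfolding B_def by auto
    have Bout: "B \<subseteq> - ball x0 \<epsilon>" if "\<epsilon> \<le> \<delta>" for \<epsilon>
    proof
      fix y assume y: "y \<in> B"
      then have "dist y1 y < \<delta>" unfolding B_def by auto
      moreover have "dist x0 y1 \<le> dist x0 y + dist y y1" by (rule dist_triangle)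
      ultimately have "\<delta> \<le> dist x0 y" unfolding \<delta>_def by (simp add: dist_commute)
      then show "y \<in> - ball x0 \<epsilon>" using that by auto
    qed
    have Wle: "W x0 y \<le> 0" for y
    proof -
      have "(u x0 - v x0) - (u y - v y) \<le> 0" using mn by auto
      then have "((u x0 - v x0) - (u y - v y)) / norm (x0 - y) powr (real N + \<alpha>) \<le> 0"
        by (intro divide_nonpos_nonneg) auto
      then show ?thesis unfolding W_def using qtilde_pos[OF Na, of u v x0 y]
        by (intro mult_nonpos_nonneg) auto
    qed
    have Wlt: "W x0 y < 0" if y: "y \<in> B" for y
    proof -
      have yx: "y \<noteq> x0" using BU[OF y] by auto
      have "(u x0 - v x0) - (u y - v y) < 0" using BU[OF y] unfolding w_def by auto
      moreover have "0 < norm (x0 - y) powr (real N + \<alpha>)" using yx by simp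
      ultimately have "((u x0 - v x0) - (u y - v y)) / norm (x0 - y) powr (real N + \<alpha>) < 0"
        by (intro divide_neg_pos)
      then show ?thesis unfolding W_def using qtilde_pos[OF Na, of u v x0 y]
        by (intro mult_neg_pos) auto
    qed
    have intB: "set_integrable lborel B (W x0)"
      by (rule set_integrable_subset[OF intA[OF \<delta>] _ Bout[OF order_refl]]) (simp add: B_def)
    define Q where "Q = (LINT y : B | lborel. W x0 y)"
    have Qneg: "Q < 0"
    proof -
      have iB: "integrable lborel (\<lambda>y. - (indicator B y * W x0 y))"
        using intB unfolding set_integrable_def by simp
      have mQ: "(LINT y | lborel. - (indicator B y * W x0 y)) = - Q"
        unfolding Q_def set_lebesgue_integral_def by simp
      have nn: "AE y in lborel. 0 \<le> - (indicator B y * W x0 y)"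
        using Wle by (intro AE_I2) (auto simp: indicator_def)
      have "0 \<le> - Q" unfolding mQ[symmetric] using Wle
        by (intro integral_nonneg_AE nn)
      moreover have "Q \<noteq> 0"
      proof
        assume "Q = 0"
        then have "(LINT y | lborel. - (indicator B y * W x0 y)) = 0" using mQ by simp
        then have "AE y in lborel. - (indicator B y * W x0 y) = 0"
          using integral_nonneg_eq_0_iff_AE[OF iB nn] by simp
        then have ae: "AE y in lborel. y \<notin> B"
          by (rule AE_mp) (auto intro!: AE_I2 dest: Wlt)
        have "emeasure lborel B = 0"
          using ae by (subst (asm) AE_iff_measurable[of B lborel "\<lambda>y. y \<notin> B"]) (auto simp: B_def)
        moreover have "emeasure lborel B > 0"
        proof -
          have r: "0 < min \<rho> \<delta>" using \<rho> \<delta> by simp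
          have "0 < measure lborel (ball (0::'a) 1)" using content_ball_pos[of 1 "0::'a"] by simp
          then show ?thesis unfolding B_def ball_emeasure[OF less_imp_le[OF r]] using r by simp
        qed
        ultimately show False by simp
      qed
      ultimately show ?thesis by simp
    qed
    have Jle: "(LINT y : - ball x0 \<epsilon> | lborel. W x0 y) \<le> Q" if e: "0 < \<epsilon>" "\<epsilon> \<le> \<delta>" for \<epsilon>
    proof -
      have "(LINT y | lborel. indicator (- ball x0 \<epsilon>) y * W x0 y) \<le> (LINT y | lborel. indicator B y * W x0 y)"
      proof (rule integral_mono)
        show "integrable lborel (\<lambda>y. indicator (- ball x0 \<epsilon>) y * W x0 y)"
          using intA[OF e(1)] unfolding set_integrable_def by simp
        show "integrable lborel (\<lambda>y. indicator B y * W x0 y)"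
          using intB unfolding set_integrable_def by simp
        fix y
        show "indicator (- ball x0 \<epsilon>) y * W x0 y \<le> indicator B y * W x0 y"
          using Bout[OF e(2)] Wle[of y] by (cases "y \<in> B") (auto simp: indicator_def)
      qed
      then show ?thesis unfolding Q_def set_lebesgue_integral_def by simp
    qed
    have "NMC N \<alpha> u x0 - NMC N \<alpha> v x0 \<le> Q"
    proof (rule tendsto_upperbound[OF part1[OF x0]])
      show "\<forall>\<^sub>F \<epsilon> in at_right 0. (LINT y : - ball x0 \<epsilon> | lborel. W x0 y) \<le> Q"
        using Jle \<delta> by (intro eventually_at_rightI[of 0 \<delta>]) auto
    qed simp
    moreover have "0 \<le> NMC N \<alpha> u x0 - NMC N \<alpha> v x0" using hyp x0 by blast
    ultimately show False using Qneg by simp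
  qed
  show ?thesis using part1 part2 unfolding W_def by blast
qed

end
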